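(* Let $Y:(0,\infty)\times(0,\infty)\times[0,1]\to(0,\infty)$, $(K,L,\lambda)\mapsto Y(K,L,\lambda)$, be a smooth (in particular twice continuously differentiable) function, viewed as a family of production functions indexed by the labor share $\lambda$, with constant returns to scale: $Y(cK,cL,\lambda)=c\,Y(K,L,\lambda)$ for all $c>0$, $K,L>0$, $\lambda\in[0,1]$. Define the wage $w(K,L,\lambda)=\lambda\,Y(K,L,\lambda)/L$, and let $k=K/L$ denote the capital-to-labor ratio. Call a wage-maximizing labor share any $\lambda^*\in[0,1]$ maximizing $\lambda\mapsto w(K,L,\lambda)$ over $[0,1]$, and call $w(K,L,\lambda^* )$ the maximum wage. Then: (a) The wage-maximizing labor share(s) and the maximum wage depend on $(K,L)$ only through the capital-to-labor ratio $k=K/L$. (b) Fix $(K,L)$. Suppose there exists at least one $\lambda\in(0,1)$ satisfying the first-order condition $\lambda=-1\big/\left(\partial \ln Y/\partial\lambda\right)$, where the derivative is evaluated at $(K,L,\lambda)$. If at every $\lambda\in(0,1)$ satisfying this first-order condition the second-order condition $\partial^2\ln Y/\partial\lambda^2<0$ holds, then the wage-maximizing labor share is unique and lies strictly between $0$ and $1$.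
   Context: Here $K$ is capital, $L$ labor, $Y$ output, and $\lambda$ the labor share of output; under constant returns to scale the wage is $w=\lambda\,(Y/L)$. The derivatives $\partial\ln Y/\partial\lambda$ and $\partial^2\ln Y/\partial\lambda^2$ are partial derivatives of $\ln Y(K,L,\lambda)$ with respect to $\lambda$ with $K,L$ held fixed. *)

theory Defs
  imports "HOL-Analysis.Analysis"
begin

text \<open>Twice continuously (Frechet) differentiable on a set S (derivatives taken within S,
  so that boundary points of the closed lambda-interval are covered).\<close>
definition C2_on :: "('a::real_normed_vector \<Rightarrow> real) \<Rightarrow> 'a set \<Rightarrow> bool" where
  "C2_on f S \<longleftrightarrow>
     (\<exists>(f' :: 'a \<Rightarrow> ('a \<Rightarrow>\<^sub>L real)) (f'' :: 'a \<Rightarrow> ('a \<Rightarrow>\<^sub>L ('a \<Rightarrow>\<^sub>L real))).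
        (\<forall>x\<in>S. (f has_derivative blinfun_apply (f' x)) (at x within S)
               \<and> (f' has_derivative blinfun_apply (f'' x)) (at x within S))
        \<and> continuous_on S f'')"

definition prod_domain :: "(real \<times> real \<times> real) set" where
  "prod_domain = {0<..} \<times> {0<..} \<times> {0..1}"

definition wage :: "(real \<Rightarrow> real \<Rightarrow> real \<Rightarrow> real) \<Rightarrow> real \<Rightarrow> real \<Rightarrow> real \<Rightarrow> real" where
  "wage Y K L l = l * Y K L l / L"

definition wage_maximizing :: "(real \<Rightarrow> real \<Rightarrow> real \<Rightarrow> real) \<Rightarrow> real \<Rightarrow> real \<Rightarrow> real \<Rightarrow> bool" where
  "wage_maximizing Y K L l \<longleftrightarrow>
     l \<in> {0..1} \<and> (\<forall>m\<in>{0..1}. wage Y K L m \<le> wage Y K L l)"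

end

theory Submission
  imports Defs
begin

lemma zero_closed_Inf:
  fixes \<phi> :: "real \<Rightarrow> real"
  assumes "continuous_on {p..x} \<phi>" "p \<le> x" "\<exists>y\<in>{p..x}. \<phi> y = 0"
  shows "\<exists>s\<in>{p..x}. \<phi> s = 0 \<and> (\<forall>y\<in>{p..x}. \<phi> y = 0 \<longrightarrow> s \<le> y)"
proof -
  let ?Z = "{y\<in>{p..x}. \<phi> y = 0}"
  have cl: "closed ?Z" by (rule continuous_closed_preimage_constant) (use assms in auto)
  have ne: "?Z \<noteq> {}" using assms by auto
  have bd: "bdd_below ?Z" by (auto intro: bdd_belowI[of _ p])
  have "Inf ?Z \<in> ?Z" using closed_contains_Inf[OF ne bd cl] .
  moreover have "\<forall>y\<in>?Z. Inf ?Z \<le> y" using bd by (auto intro: cInf_lower)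
  ultimately show ?thesis by auto
qed

lemma zero_closed_Sup:
  fixes \<phi> :: "real \<Rightarrow> real"
  assumes "continuous_on {p..x} \<phi>" "p \<le> x" "\<exists>y\<in>{p..x}. \<phi> y = 0"
  shows "\<exists>s\<in>{p..x}. \<phi> s = 0 \<and> (\<forall>y\<in>{p..x}. \<phi> y = 0 \<longrightarrow> y \<le> s)"
proof -
  let ?Z = "{y\<in>{p..x}. \<phi> y = 0}"
  have cl: "closed ?Z" by (rule continuous_closed_preimage_constant) (use assms in auto)
  have ne: "?Z \<noteq> {}" using assms by auto
  have bd: "bdd_above ?Z" by (auto intro: bdd_aboveI[of _ x])
  have "Sup ?Z \<in> ?Z" using closed_contains_Sup[OF ne bd cl] .
  moreover have "\<forall>y\<in>?Z. y \<le> Sup ?Z" using bd by (auto intro: cSup_upper)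
  ultimately show ?thesis by auto
qed

lemma sign_right_left:
  fixes \<phi> :: "real \<Rightarrow> real"
  assumes der: "\<And>w. w \<in> {a<..<b} \<Longrightarrow> \<phi> w = 0 \<Longrightarrow> \<exists>D. (\<phi> has_real_derivative D) (at w) \<and> D < 0"
    and hz: "z \<in> {a<..<b}" "\<phi> z = 0"
  shows "z < q \<Longrightarrow> \<exists>y. z < y \<and> y < q \<and> \<phi> y < 0"
    and "q < z \<Longrightarrow> \<exists>y. q < y \<and> y < z \<and> \<phi> y > 0"
proof -
  obtain D where D: "(\<phi> has_real_derivative D) (at z)" "D < 0" using der hz by blast
  {
    assume zq: "z < q"
    obtain d where d: "d > 0" "\<forall>h>0. h < d \<longrightarrow> \<phi> z > \<phi> (z + h)"
      using DERIV_neg_dec_right[OF D] by blast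
    have pos: "0 < q - z" using zq by simp
    obtain e where e: "0 < e" "e < d" "e < q - z" using field_lbound_gt_zero[OF d(1) pos] by blast
    have "\<phi> (z + e) < 0" using d(2) e hz(2) by simp
    moreover have "z < z + e" "z + e < q" using e by linarith+
    ultimately show "\<exists>y. z < y \<and> y < q \<and> \<phi> y < 0" by blast
  }
  {
    assume zq: "q < z"
    obtain d where d: "d > 0" "\<forall>h>0. h < d \<longrightarrow> \<phi> z < \<phi> (z - h)"
      using DERIV_neg_dec_left[OF D] by blast
    have pos: "0 < z - q" using zq by simp
    obtain e where e: "0 < e" "e < d" "e < z - q" using field_lbound_gt_zero[OF d(1) pos] by blast
    have "\<phi> (z - e) > 0" using d(2) e hz(2) by simp
    moreover have "q < z - e" "z - e < z" using e by linarith+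
    ultimately show "\<exists>y. q < y \<and> y < z \<and> \<phi> y > 0" by blast
  }
qed

lemma sign_lemma:
  fixes \<phi> :: "real \<Rightarrow> real"
  assumes cont: "continuous_on {a<..<b} \<phi>"
    and der: "\<And>z. z \<in> {a<..<b} \<Longrightarrow> \<phi> z = 0 \<Longrightarrow> \<exists>D. (\<phi> has_real_derivative D) (at z) \<and> D < 0"
    and c: "c \<in> {a<..<b}" "\<phi> c = 0"
  shows "(\<forall>x\<in>{c<..<b}. \<phi> x < 0) \<and> (\<forall>x\<in>{a<..<c}. \<phi> x > 0)"
proof (intro conjI ballI)
  have right: "\<And>z q. z \<in> {a<..<b} \<Longrightarrow> \<phi> z = 0 \<Longrightarrow> z < q \<Longrightarrow> \<exists>y. z < y \<and> y < q \<and> \<phi> y < 0"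
    using sign_right_left(1)[where a=a and b=b and \<phi>=\<phi>] der by metis
  have left: "\<And>z q. z \<in> {a<..<b} \<Longrightarrow> \<phi> z = 0 \<Longrightarrow> q < z \<Longrightarrow> \<exists>y. q < y \<and> y < z \<and> \<phi> y > 0"
    using sign_right_left(2)[where a=a and b=b and \<phi>=\<phi>] der by metis
  fix x assume x: "x \<in> {c<..<b}"
  show "\<phi> x < 0"
  proof (rule ccontr)
    assume nx: "\<not> \<phi> x < 0"
    obtain p where p: "c < p" "p < x" "\<phi> p < 0" using right[OF c(1) c(2)] x by auto
    have cpx: "continuous_on {p..x} \<phi>" using cont by (rule continuous_on_subset) (use p c x in auto)
    obtain s0 where "p \<le> s0" "s0 \<le> x" "\<phi> s0 = 0" using IVT'[of \<phi> p 0 x] cpx p nx by force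
    then have "\<exists>y\<in>{p..x}. \<phi> y = 0" by auto
    then obtain s where s: "s\<in>{p..x}" "\<phi> s = 0" "\<forall>y\<in>{p..x}. \<phi> y = 0 \<longrightarrow> s \<le> y"
      using zero_closed_Inf[OF cpx] p by auto
    have "p \<noteq> s" using s p by auto
    then have ps: "p < s" using s by auto
    have sab: "s \<in> {a<..<b}" using s p c x by auto
    obtain y where y: "p < y" "y < s" "\<phi> y > 0" using left[OF sab s(2) ps] by blast
    have cpy: "continuous_on {p..y} \<phi>" using cpx by (rule continuous_on_subset) (use y s in auto)
    obtain t where t: "p \<le> t" "t \<le> y" "\<phi> t = 0" using IVT'[of \<phi> p 0 y] cpy p y by force
    have "t \<in> {p..x}" using t y s by auto
    then have "s \<le> t" using s(3) t(3) by blast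
    then show False using t y by linarith
  qed
next
  have right: "\<And>z q. z \<in> {a<..<b} \<Longrightarrow> \<phi> z = 0 \<Longrightarrow> z < q \<Longrightarrow> \<exists>y. z < y \<and> y < q \<and> \<phi> y < 0"
    using sign_right_left(1)[where a=a and b=b and \<phi>=\<phi>] der by metis
  have left: "\<And>z q. z \<in> {a<..<b} \<Longrightarrow> \<phi> z = 0 \<Longrightarrow> q < z \<Longrightarrow> \<exists>y. q < y \<and> y < z \<and> \<phi> y > 0"
    using sign_right_left(2)[where a=a and b=b and \<phi>=\<phi>] der by metis
  fix x assume x: "x \<in> {a<..<c}"
  show "\<phi> x > 0"
  proof (rule ccontr)
    assume nx: "\<not> \<phi> x > 0"
    obtain q where q: "x < q" "q < c" "\<phi> q > 0" using left[OF c(1) c(2)] x by auto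
    have cxq: "continuous_on {x..q} \<phi>" using cont by (rule continuous_on_subset) (use q c x in auto)
    obtain s0 where "x \<le> s0" "s0 \<le> q" "\<phi> s0 = 0" using IVT'[of \<phi> x 0 q] cxq q nx by force
    then have "\<exists>y\<in>{x..q}. \<phi> y = 0" by auto
    then obtain s where s: "s\<in>{x..q}" "\<phi> s = 0" "\<forall>y\<in>{x..q}. \<phi> y = 0 \<longrightarrow> y \<le> s"
      using zero_closed_Sup[OF cxq] q by auto
    have "q \<noteq> s" using s q by auto
    then have sq: "s < q" using s by auto
    have sab: "s \<in> {a<..<b}" using s q c x by auto
    obtain y where y: "s < y" "y < q" "\<phi> y < 0" using right[OF sab s(2) sq] by blast
    have cyq: "continuous_on {y..q} \<phi>" using cxq by (rule continuous_on_subset) (use y s in auto)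
    obtain t where t: "y \<le> t" "t \<le> q" "\<phi> t = 0" using IVT'[of \<phi> y 0 q] cyq q y by force
    have "t \<in> {x..q}" using t y s by auto
    then have "t \<le> s" using s(3) t(3) by blast
    then show False using t y by linarith
  qed
qed


lemma smooth_facts:
  fixes Y :: "real \<Rightarrow> real \<Rightarrow> real \<Rightarrow> real"
  assumes smooth: "C2_on (\<lambda>(K, L, l). Y K L l) prod_domain" and KL: "K > 0" "L > 0"
  shows "continuous_on {0..1} (Y K L)"
    and "\<And>m. m \<in> {0<..<1} \<Longrightarrow> (Y K L has_real_derivative deriv (Y K L) m) (at m)"
    and "\<And>m. m \<in> {0<..<1} \<Longrightarrow> (deriv (Y K L) has_real_derivative deriv (deriv (Y K L)) m) (at m)"
proof -
  define F where "F = (\<lambda>(K, L, l). Y K L l)"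
  obtain f' :: "real \<times> real \<times> real \<Rightarrow> (real \<times> real \<times> real) \<Rightarrow>\<^sub>L real"
    and f'' :: "real \<times> real \<times> real \<Rightarrow> (real \<times> real \<times> real) \<Rightarrow>\<^sub>L ((real \<times> real \<times> real) \<Rightarrow>\<^sub>L real)"
    where d1: "\<And>x. x \<in> prod_domain \<Longrightarrow> (F has_derivative blinfun_apply (f' x)) (at x within prod_domain)"
      and d2: "\<And>x. x \<in> prod_domain \<Longrightarrow> (f' has_derivative blinfun_apply (f'' x)) (at x within prod_domain)"
    using smooth unfolding C2_on_def F_def by blast
  define e where "e = (\<lambda>m::real. (K, L, m))"
  have Fe: "F (e m) = Y K L m" for m by (simp add: F_def e_def)
  have ede: "(e has_derivative (\<lambda>t. (0, 0, t))) (at m)" for m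
    unfolding e_def by (auto intro!: derivative_eq_intros)
  have eimg: "e ` {0..1} \<subseteq> prod_domain" using KL by (auto simp: e_def prod_domain_def)
  have conte: "continuous_on {0..1} e" unfolding e_def by (intro continuous_intros)
  have contF: "continuous_on prod_domain F"
    using d1 has_derivative_continuous continuous_on_eq_continuous_within by blast
  have "continuous_on {0..1} (\<lambda>m. F (e m))"
    by (rule continuous_on_compose2[OF contF conte eimg])
  then show "continuous_on {0..1} (Y K L)" by (simp add: Fe)
  define U where "U = ({0<..} \<times> {0<..} \<times> {0<..<1} :: (real \<times> real \<times> real) set)"
  have openU: "open U" unfolding U_def by (intro open_Times) auto
  have Usub: "U \<subseteq> prod_domain" by (auto simp: U_def prod_domain_def)
  have eU: "e m \<in> U" if "m \<in> {0<..<1}" for m using that KL by (auto simp: e_def U_def)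
  have atU: "at (e m) within prod_domain = at (e m)" if "m \<in> {0<..<1}" for m
    using at_within_open_subset[OF eU[OF that] openU Usub] .
  define D where "D m = blinfun_apply (f' (e m)) (0, 0, 1)" for m
  have hD: "(Y K L has_real_derivative D m) (at m)" if m: "m \<in> {0<..<1}" for m
  proof -
    have "(F has_derivative blinfun_apply (f' (e m))) (at (e m))"
      using d1[of "e m"] eU[OF m] Usub atU[OF m] by auto
    from has_derivative_compose[OF ede this]
    have "((\<lambda>x. F (e x)) has_derivative (\<lambda>t. blinfun_apply (f' (e m)) (0, 0, t))) (at m)" .
    moreover have "(\<lambda>t. blinfun_apply (f' (e m)) (0, 0, t)) = (\<lambda>t. D m * t)"
    proof
      fix t :: real
      have "(0::real, 0::real, t) = t *\<^sub>R (0, 0, 1)" by simp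
      then show "blinfun_apply (f' (e m)) (0, 0, t) = D m * t"
        by (simp add: D_def blinfun.scaleR_right del: scaleR_Pair)
    qed
    ultimately show ?thesis by (simp add: Fe has_field_derivative_def)
  qed
  have derivD: "deriv (Y K L) m = D m" if "m \<in> {0<..<1}" for m
    using hD[OF that] by (rule DERIV_imp_deriv)
  show "(Y K L has_real_derivative deriv (Y K L) m) (at m)" if "m \<in> {0<..<1}" for m
    using hD[OF that] derivD[OF that] by simp
  have Ddiff: "D differentiable (at m)" if m: "m \<in> {0<..<1}" for m
  proof -
    have "(f' has_derivative blinfun_apply (f'' (e m))) (at (e m))"
      using d2[of "e m"] eU[OF m] Usub atU[OF m] by auto
    from has_derivative_compose[OF ede this]
    have "((\<lambda>x. f' (e x)) has_derivative (\<lambda>t. blinfun_apply (f'' (e m)) (0, 0, t))) (at m)" .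
    from bounded_linear.has_derivative[OF blinfun.bounded_linear_left this, of "(0,0,1)"]
    show ?thesis unfolding D_def differentiable_def by blast
  qed
  show "(deriv (Y K L) has_real_derivative deriv (deriv (Y K L)) m) (at m)" if m: "m \<in> {0<..<1}" for m
  proof -
    have "(D has_real_derivative deriv D m) (at m)"
      using Ddiff[OF m] DERIV_deriv_iff_real_differentiable by blast
    then have "(deriv (Y K L) has_real_derivative deriv D m) (at m)"
      by (rule has_field_derivative_transform_within_open[of _ _ _ "{0<..<1}"]) (use m derivD in auto)
    then show ?thesis using DERIV_deriv_iff_real_differentiable real_differentiable_def by blast
  qed
qed

theorem theorem1:
  fixes Y :: "real \<Rightarrow> real \<Rightarrow> real \<Rightarrow> real"
  assumes smooth: "C2_on (\<lambda>(K, L, l). Y K L l) prod_domain"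
    and pos: "\<And>K L l. K > 0 \<Longrightarrow> L > 0 \<Longrightarrow> l \<in> {0..1} \<Longrightarrow> Y K L l > 0"
    and crs: "\<And>c K L l. c > 0 \<Longrightarrow> K > 0 \<Longrightarrow> L > 0 \<Longrightarrow> l \<in> {0..1} \<Longrightarrow>
                 Y (c * K) (c * L) l = c * Y K L l"
  shows
    "(\<forall>K L K' L'. K > 0 \<longrightarrow> L > 0 \<longrightarrow> K' > 0 \<longrightarrow> L' > 0 \<longrightarrow> K / L = K' / L' \<longrightarrow>
        {l. wage_maximizing Y K L l} = {l. wage_maximizing Y K' L' l}
        \<and> (\<forall>l l'. wage_maximizing Y K L l \<longrightarrow> wage_maximizing Y K' L' l' \<longrightarrow>
                 wage Y K L l = wage Y K' L' l'))
     \<and>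
     (\<forall>K L. K > 0 \<longrightarrow> L > 0 \<longrightarrow>
        (\<exists>l\<in>{0<..<1}. l = - 1 / deriv (\<lambda>m. ln (Y K L m)) l) \<longrightarrow>
        (\<forall>l\<in>{0<..<1}. l = - 1 / deriv (\<lambda>m. ln (Y K L m)) l \<longrightarrow>
             deriv (deriv (\<lambda>m. ln (Y K L m))) l < 0) \<longrightarrow>
        (\<exists>l\<in>{0<..<1}. wage_maximizing Y K L l \<and>
             (\<forall>m. wage_maximizing Y K L m \<longrightarrow> m = l)))"
proof (rule conjI)
 show "\<forall>K L K' L'. K > 0 \<longrightarrow> L > 0 \<longrightarrow> K' > 0 \<longrightarrow> L' > 0 \<longrightarrow> K / L = K' / L' \<longrightarrow>
        {l. wage_maximizing Y K L l} = {l. wage_maximizing Y K' L' l}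
        \<and> (\<forall>l l'. wage_maximizing Y K L l \<longrightarrow> wage_maximizing Y K' L' l' \<longrightarrow>
                 wage Y K L l = wage Y K' L' l')"
 proof (intro conjI allI impI)
  fix K L K' L' :: real
  assume K: "K > 0" and L: "L > 0" and K': "K' > 0" and L': "L' > 0" and r: "K / L = K' / L'"
  define c where "c = L' / L"
  have c: "c > 0" using L L' by (simp add: c_def)
  have KK: "K' = c * K" and LL: "L' = c * L" using r L L' by (auto simp: c_def field_simps)
  have wq: "wage Y K' L' l = wage Y K L l" if "l \<in> {0..1}" for l
    using crs[OF c K L that] c L by (simp add: wage_def KK LL)
  have eqv: "wage_maximizing Y K L l \<longleftrightarrow> wage_maximizing Y K' L' l" for l
    unfolding wage_maximizing_def using wq by auto
  show "{l. wage_maximizing Y K L l} = {l. wage_maximizing Y K' L' l}" using eqv by auto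
  fix l l'
  show "wage Y K L l = wage Y K' L' l'" if a: "wage_maximizing Y K L l" and b: "wage_maximizing Y K' L' l'"
  proof -
    have l: "l \<in> {0..1}" and l': "l' \<in> {0..1}" using a b by (auto simp: wage_maximizing_def)
    have "wage Y K L l' \<le> wage Y K L l" using a l' by (auto simp: wage_maximizing_def)
    moreover have "wage Y K' L' l \<le> wage Y K' L' l'" using b l by (auto simp: wage_maximizing_def)
    ultimately show "wage Y K L l = wage Y K' L' l'" using wq[OF l] wq[OF l'] by linarith
  qed
 qed
next
 show "\<forall>K L. K > 0 \<longrightarrow> L > 0 \<longrightarrow>
        (\<exists>l\<in>{0<..<1}. l = - 1 / deriv (\<lambda>m. ln (Y K L m)) l) \<longrightarrow>
        (\<forall>l\<in>{0<..<1}. l = - 1 / deriv (\<lambda>m. ln (Y K L m)) l \<longrightarrow>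
             deriv (deriv (\<lambda>m. ln (Y K L m))) l < 0) \<longrightarrow>
        (\<exists>l\<in>{0<..<1}. wage_maximizing Y K L l \<and>
             (\<forall>m. wage_maximizing Y K L m \<longrightarrow> m = l))"
 proof (intro allI impI)
  fix K L :: real
  assume K: "K > 0" and L: "L > 0"
  assume foc: "\<exists>l\<in>{0<..<1}. l = - 1 / deriv (\<lambda>m. ln (Y K L m)) l"
  assume soc: "\<forall>l\<in>{0<..<1}. l = - 1 / deriv (\<lambda>m. ln (Y K L m)) l \<longrightarrow>
             deriv (deriv (\<lambda>m. ln (Y K L m))) l < 0"
  define h where "h = Y K L"
  define H where "H = (\<lambda>m. ln (h m))"
  define G where "G = deriv H"
  define \<phi> where "\<phi> = (\<lambda>m. 1 / m + G m)"
  note sf = smooth_facts[OF smooth K L, folded h_def]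
  have hpos: "h m > 0" if "m \<in> {0..1}" for m using pos[OF K L that] by (simp add: h_def)
  have Hd: "(H has_real_derivative (1 / h m * deriv h m)) (at m)" if m: "m \<in> {0<..<1}" for m
    unfolding H_def by (rule DERIV_chain2[OF DERIV_ln_divide sf(2)[OF m]]) (use hpos m in auto)
  have Geq: "G m = deriv h m / h m" if m: "m \<in> {0<..<1}" for m
    using DERIV_imp_deriv[OF Hd[OF m]] by (simp add: G_def)
  have Gd: "(G has_real_derivative deriv G m) (at m)" if m: "m \<in> {0<..<1}" for m
  proof -
    have "((\<lambda>x. deriv h x / h x) has_real_derivative
        (deriv (deriv h) m * h m - deriv h m * deriv h m) / (h m * h m)) (at m)"
      by (rule DERIV_divide[OF sf(3)[OF m] sf(2)[OF m]]) (use hpos[of m] m in auto)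
    then have "(G has_real_derivative
        (deriv (deriv h) m * h m - deriv h m * deriv h m) / (h m * h m)) (at m)"
      by (rule has_field_derivative_transform_within_open[of _ _ _ "{0<..<1}"]) (use m Geq in auto)
    then show ?thesis using DERIV_deriv_iff_real_differentiable real_differentiable_def by blast
  qed
  have HdG: "(H has_real_derivative G m) (at m)" if m: "m \<in> {0<..<1}" for m
    using Hd[OF m] DERIV_imp_deriv[OF Hd[OF m]] by (simp add: G_def)
  have \<phi>d: "(\<phi> has_real_derivative (- 1 / m^2 + deriv G m)) (at m)" if m: "m \<in> {0<..<1}" for m
  proof -
    have "((\<lambda>x. inverse x) has_real_derivative - (inverse m * inverse m)) (at m)"
      using DERIV_inverse[of m UNIV] m by (simp add: power2_eq_square)
    from DERIV_add[OF this Gd[OF m]]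
    show ?thesis unfolding \<phi>_def by (simp add: divide_inverse power2_eq_square)
  qed
  have cont\<phi>: "continuous_on {0<..<1} \<phi>"
    using \<phi>d DERIV_isCont continuous_at_imp_continuous_on by blast
  have Gfun: "G = deriv (\<lambda>m. ln (Y K L m))" by (simp add: G_def H_def h_def)
  have zero_iff: "\<phi> m = 0 \<longleftrightarrow> m = - 1 / G m" if m: "m \<in> {0<..<1}" for m
  proof
    assume "\<phi> m = 0"
    then have "G m = - 1 / m" unfolding \<phi>_def by (simp add: eq_neg_iff_add_eq_0 add.commute)
    then show "m = - 1 / G m" using m by simp
  next
    assume a: "m = - 1 / G m"
    have "G m \<noteq> 0" using a m by auto
    then have "G m = - 1 / m" using a m by (auto simp: field_simps)
    then show "\<phi> m = 0" unfolding \<phi>_def by simp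
  qed
  have der0: "\<exists>D. (\<phi> has_real_derivative D) (at z) \<and> D < 0" if z: "z \<in> {0<..<1}" "\<phi> z = 0" for z
  proof -
    have "deriv G z < 0" using soc z zero_iff[OF z(1)] Gfun by auto
    moreover have "1 / z^2 > 0" using z by auto
    ultimately have "- 1 / z^2 + deriv G z < 0" by linarith
    then show ?thesis using \<phi>d[OF z(1)] by blast
  qed
  obtain c where c: "c \<in> {0<..<1}" "c = - 1 / G c" using foc Gfun by auto
  have \<phi>c: "\<phi> c = 0" using zero_iff[OF c(1)] c(2) by simp
  have signs: "(\<forall>x\<in>{c<..<1}. \<phi> x < 0) \<and> (\<forall>x\<in>{0<..<c}. \<phi> x > 0)"
    by (rule sign_lemma[OF cont\<phi> der0 c(1) \<phi>c])
  define g where "g = (\<lambda>m. ln m + H m)"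
  have gd: "(g has_real_derivative \<phi> m) (at m)" if m: "m \<in> {0<..<1}" for m
    unfolding g_def \<phi>_def by (rule DERIV_add[OF DERIV_ln_divide HdG[OF m]]) (use m in auto)
  have contH: "continuous_on {0..1} H"
    unfolding H_def by (intro continuous_intros sf(1)) (use hpos in force)
  have contg: "continuous_on {a..b} g" if "0 < a" "b \<le> 1" for a b
  proof -
    have "continuous_on {a..b} H" using contH by (rule continuous_on_subset) (use that in auto)
    moreover have "continuous_on {a..b} ln" by (intro continuous_intros) (use that in auto)
    ultimately show ?thesis unfolding g_def by (intro continuous_intros) (use that in auto)
  qed
  have gdiff: "g differentiable (at x)" if "x \<in> {0<..<1}" for x
    using gd[OF that] real_differentiable_def by blast
  have wg: "wage Y K L m = exp (g m) / L" if "m \<in> {0<..1}" for m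
    using that hpos[of m] by (simp add: wage_def g_def H_def h_def exp_add)
  have less: "wage Y K L m < wage Y K L c" if m: "m \<in> {0..1}" "m \<noteq> c" for m
  proof (cases "m = 0")
    case True
    have "wage Y K L c > 0" using hpos[of c] c L by (simp add: wage_def h_def)
    then show ?thesis using True by (simp add: wage_def)
  next
    case False
    have "g m < g c"
    proof (cases "m < c")
      case True
      obtain l z where lz: "m < z" "z < c" "(g has_real_derivative l) (at z)" "g c - g m = (c - m) * l"
        using MVT[OF True contg gdiff] False m c by auto
      have "l = \<phi> z" using DERIV_unique[OF lz(3) gd] lz m c by auto
      then have "l > 0" using signs lz m False by auto
      then have "(c - m) * l > 0" using True by simp
      then show ?thesis using lz by linarith
    next
      case False
      then have cm: "c < m" using m by auto
      obtain l z where lz: "c < z" "z < m" "(g has_real_derivative l) (at z)" "g m - g c = (m - c) * l"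
        using MVT[OF cm contg gdiff] m c by auto
      have "l = \<phi> z" using DERIV_unique[OF lz(3) gd] lz m c by auto
      then have "l < 0" using signs lz m by auto
      then have "(m - c) * l < 0" using cm by (simp add: mult_pos_neg)
      then show ?thesis using lz by linarith
    qed
    then show ?thesis using wg[of m] wg[of c] m c False L by (simp add: divide_strict_right_mono)
  qed
  show "\<exists>l\<in>{0<..<1}. wage_maximizing Y K L l \<and> (\<forall>m. wage_maximizing Y K L m \<longrightarrow> m = l)"
  proof (intro bexI[OF _ c(1)] conjI allI impI)
    show "wage_maximizing Y K L c"
      unfolding wage_maximizing_def using c less by (metis atLeastAtMost_iff greaterThanLessThan_iff less_eq_real_def order_refl)
    fix m assume "wage_maximizing Y K L m"
    then have "m \<in> {0..1}" "wage Y K L c \<le> wage Y K L m" using c by (auto simp: wage_maximizing_def)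
    then show "m = c" using less by force
  qed
 qed
qed

end
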